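(* Let $0<s<1$, $0<\tilde\delta<1/16$ and $1<\tilde R<1/s$, and let $n_0$ be the constant of the context. Then there exists $m_0''\in\mathbb{N}$ (depending on $s,\tilde\delta,\tilde R$) such that whenever $m>m_0''$, $1< R<\min(\tilde R,3/2)$, $(r_j)_{j=1}^{m-1}\in E_{\varepsilon}$ with $\varepsilon=\log(R^{1/n_0})$, $w\in\overline D(0,3/4)$ and $\tilde\delta\le\delta\le 1/16$, the map $\iota=\iota^{w,\delta,m,R,(r_j)}$ satisfies \[\operatorname{supp}(\iota_{\bar z})\subset\{z\in\mathbb{D}:|z|>s\}.\]
   Context: $\psi_{\delta,m}$: with $b(x)=\exp(1+\frac1{x^2-1})$ for $0\le x<1$, $b(x)=0$ for $x\ge 1$, $r=1-4\delta/m$, $\hat\eta(x)=1$ for $x\le r$, $\hat\eta(x)=b(\frac{x-r}{1-r})$ for $r\le x\le1$, $\hat\eta(x)=0$ for $x\ge1$, set $\psi_{\delta,m}(z)=z^m+\delta z\hat\eta(|z|)$ on $\mathbb{D}$. $\beta_{R,M,(r_j)}$ for $M\in\mathbb N$, $R>1$, $(r_j)_{j=1}^M\in E_\varepsilon$ (where $\xi_j=e^{(2j-1)\pi i/M}$ and $E_\varepsilon=\{(r_j)\in\prod_{j=1}^M\exp(\overline D(0,\varepsilon)):\frac{r_{j+1}\xi_{j+1}-r_j\xi_j}{\xi_{j+1}-\xi_j}\in\exp(\overline D(0,\varepsilon)),1\le j\le M\}$, indices mod $M$): it equals the identity on $|z|\ge R$ and $|z|\le R^{-1}$, and on $R^{-1}<|z|<R$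 it is $\beta(e^\zeta)=e^{\hat\beta(\zeta)}$ where $\hat\beta$ is the $2\pi i$-periodic piecewise affine map on the strip $|\operatorname{Re}\zeta|\le\log R$, affine on the triangles $(a_j,a_{j+1},a_j^{\pm})$, $(a_{j+1},a_j^{\pm},a_{j+1}^{\pm})$ with $a_j=(2j-1)\pi i/M$, $a_j^\pm=\pm\log R+a_j$, fixing $a_j^\pm$ and sending $a_j\mapsto a_j+\operatorname{Log}r_j$. There are constants $m_0'$, $n_0$ such that for $M>m_0'$, $1<R<3/2$, $\varepsilon=\log(R^{1/n_0})$ this $\beta$ is a quasiconformal homeomorphism of $\mathbb{C}$ with $\beta(\xi_j)=r_j\xi_j$. For $\Lambda>0$ set $\beta^\Lambda(z)=\Lambda\beta(z/\Lambda)$. $\rho_w$ for $w\in\overline D(0,3/4)$: $\rho_w(z)=z+w$ for $|z|\le1/8$ and $\rho_w(z)=z\frac{8|z|-1}{7}+(z+w)\frac{8-8|z|}{7}$ for $1/8\le|z|\le1$. $\Lambda(\delta,m)=\delta(\delta/m)^{1/(m-1)}\frac{m-1}{m}$, and $\iota^{w,\delta,m,R,(r_j)}=\rho_w\circ\beta^{\Lambda(\delta,m)}_{R,m-1,(r_j)_{j=1}^{m-1}}\circ\psi_{\delta,m}:\mathbb{D}\to\mathbb{D}$. *)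

theory Defs
  imports "HOL-Complex_Analysis.Complex_Analysis"
begin

definition bump :: "real \<Rightarrow> real" where
  "bump x = (if x < 1 then exp (1 + 1 / (x\<^sup>2 - 1)) else 0)"

definition eta_hat :: "real \<Rightarrow> real \<Rightarrow> real" where
  "eta_hat r x = (if x \<le> r then 1 else if x \<le> 1 then bump ((x - r) / (1 - r)) else 0)"

definition psi :: "real \<Rightarrow> nat \<Rightarrow> complex \<Rightarrow> complex" where
  "psi \<delta> m z = z ^ m + of_real \<delta> * z * of_real (eta_hat (1 - 4 * \<delta> / real m) (norm z))"

definition xi :: "nat \<Rightarrow> int \<Rightarrow> complex" where
  "xi M j = exp (of_real ((2 * of_int j - 1) * pi / real M) * \<i>)"

definition ridx :: "nat \<Rightarrow> int \<Rightarrow> nat" where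
  "ridx M j = nat ((j - 1) mod int M) + 1"

definition E_set :: "real \<Rightarrow> nat \<Rightarrow> (nat \<Rightarrow> complex) set" where
  "E_set \<epsilon> M = {r. (\<forall>j\<in>{1..M}. r j \<in> exp ` cball 0 \<epsilon>) \<and>
     (\<forall>j\<in>{1..int M}.
        (r (ridx M (j+1)) * xi M (j+1) - r (ridx M j) * xi M j) / (xi M (j+1) - xi M j)
          \<in> exp ` cball 0 \<epsilon>)}"

text \<open>Displacement beta_hat(zeta) - zeta on the strip |Re zeta| <= log R: it is the affine
  interpolation on the triangles (a_j,a_(j+1),a_j^+-), (a_(j+1),a_j^+-,a_(j+1)^+-) of the values
  Log r_j at a_j and 0 at a_j^+-.  Here u = |Re zeta|/log R and t is the relative height of
  Im zeta in the band [Im a_j, Im a_(j+1)].\<close>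

definition beta_hat :: "real \<Rightarrow> nat \<Rightarrow> (nat \<Rightarrow> complex) \<Rightarrow> complex \<Rightarrow> complex" where
  "beta_hat R M r \<zeta> =
    (let L = ln R; u = \<bar>Re \<zeta>\<bar> / L;
         j = \<lfloor>(Im \<zeta> * real M / pi + 1) / 2\<rfloor>;
         t = (Im \<zeta> - (2 * of_int j - 1) * pi / real M) / (2 * pi / real M);
         cj = Ln (r (ridx M j)); cj1 = Ln (r (ridx M (j + 1)));
         d = (if u + t \<le> 1 then of_real (1 - u - t) * cj + of_real t * cj1
              else of_real (1 - u) * cj1)
     in \<zeta> + d)"

definition beta :: "real \<Rightarrow> nat \<Rightarrow> (nat \<Rightarrow> complex) \<Rightarrow> complex \<Rightarrow> complex" where
  "beta R M r z = (if norm z \<ge> R \<or> norm z \<le> 1 / R then z else exp (beta_hat R M r (Ln z)))"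

definition beta_scaled :: "real \<Rightarrow> real \<Rightarrow> nat \<Rightarrow> (nat \<Rightarrow> complex) \<Rightarrow> complex \<Rightarrow> complex" where
  "beta_scaled \<Lambda> R M r z = of_real \<Lambda> * beta R M r (z / of_real \<Lambda>)"

definition rho :: "complex \<Rightarrow> complex \<Rightarrow> complex" where
  "rho w z = (if norm z \<le> 1/8 then z + w
              else if norm z \<le> 1 then z * of_real ((8 * norm z - 1) / 7) + (z + w) * of_real ((8 - 8 * norm z) / 7)
              else z)"

definition Lam :: "real \<Rightarrow> nat \<Rightarrow> real" where
  "Lam \<delta> m = \<delta> * (\<delta> / real m) powr (1 / (real m - 1)) * (real m - 1) / real m"

definition iota :: "complex \<Rightarrow> real \<Rightarrow> nat \<Rightarrow> real \<Rightarrow> (nat \<Rightarrow> complex) \<Rightarrow> complex \<Rightarrow> complex" where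
  "iota w \<delta> m R r = rho w \<circ> beta_scaled (Lam \<delta> m) R (m - 1) r \<circ> psi \<delta> m"

text \<open>For a continuous f on an open set U, the (distributional) support of f_zbar is the
  complement in U of the set of points having an open neighbourhood in U on which f is
  holomorphic (Weyl's lemma).\<close>

definition dbar_support :: "(complex \<Rightarrow> complex) \<Rightarrow> complex set \<Rightarrow> complex set" where
  "dbar_support f U = U - {z. \<exists>V. open V \<and> z \<in> V \<and> V \<subseteq> U \<and> f holomorphic_on V}"

end

theory Submission
  imports Defs "HOL-Real_Asymp.Real_Asymp"
begin

lemma iota_eq:
  fixes z w :: complex
  assumes m2: "m \<ge> 2" and d0: "0 < \<delta>" and R1: "1 < R"
    and zr: "norm z \<le> 1 - 4 * \<delta> / real m"
    and bL: "norm z ^ m + \<delta> * norm z \<le> Lam \<delta> m / R"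
    and b8: "norm z ^ m + \<delta> * norm z \<le> 1/8"
    and L0: "Lam \<delta> m > 0"
  shows "iota w \<delta> m R r z = z ^ m + of_real \<delta> * z + w"
proof -
  have "eta_hat (1 - 4 * \<delta> / real m) (norm z) = 1"
    using zr by (simp add: eta_hat_def)
  hence ps: "psi \<delta> m z = z ^ m + of_real \<delta> * z"
    by (simp add: psi_def)
  define p where "p = z ^ m + of_real \<delta> * z"
  have np: "norm p \<le> norm z ^ m + \<delta> * norm z"
    unfolding p_def
    by (metis (no_types, lifting) d0 less_eq_real_def norm_mult norm_of_real norm_power norm_triangle_ineq abs_of_pos)
  let ?L = "Lam \<delta> m"
  have "norm (p / of_real ?L) = norm p / ?L" using L0 by (simp add: norm_divide)
  also have "\<dots> \<le> 1 / R" using np bL L0 R1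
    by (simp add: divide_simps) (smt (verit, best) mult.commute mult_left_mono)
  finally have "norm (p / of_real ?L) \<le> 1 / R" .
  hence "beta R (m - 1) r (p / of_real ?L) = p / of_real ?L" by (simp add: beta_def)
  hence bs: "beta_scaled ?L R (m - 1) r p = p"
    using L0 by (simp add: beta_scaled_def)
  have "rho w p = p + w" using np b8 by (simp add: rho_def)
  thus ?thesis using ps bs by (simp add: iota_def p_def)
qed

theorem proposition3p7:
  fixes s \<delta>t Rt :: real and n0 :: nat
  assumes "0 < s" "s < 1" "0 < \<delta>t" "\<delta>t < 1/16" "1 < Rt" "Rt < 1 / s" "n0 \<ge> 1"
  shows "\<exists>m0::nat. \<forall>m R r w \<delta>.
           m > m0 \<longrightarrow> 1 < R \<longrightarrow> R < min Rt (3/2) \<longrightarrow>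
           r \<in> E_set (ln (R powr (1 / real n0))) (m - 1) \<longrightarrow>
           w \<in> cball 0 (3/4) \<longrightarrow> \<delta>t \<le> \<delta> \<longrightarrow> \<delta> \<le> 1/16 \<longrightarrow>
           dbar_support (iota w \<delta> m R r) (ball 0 1) \<subseteq> {z \<in> ball 0 1. norm z > s}"
proof -
  note a = assms
  define s' where "s' = (s + 1/Rt) / 2"
  have sRt: "s < 1/Rt" using a by (simp add: field_simps)
  have s'1: "s < s'" "s' < 1/Rt" using sRt by (auto simp: s'_def)
  have Rt1: "1/Rt < 1" using a by simp
  have s'0: "0 < s'" "s' < 1" using s'1 a Rt1 by linarith+
  define c where "c = (\<lambda>m::nat. (\<delta>t / real m) powr (1 / (real m - 1)) * (real m - 1) / real m)"
  have cl: "c \<longlonglongrightarrow> 1" unfolding c_def using a(3) by real_asymp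
  have pl: "(\<lambda>m::nat. s' ^ m) \<longlonglongrightarrow> 0" using s'0 by (simp add: LIMSEQ_realpow_zero)
  have gl: "(\<lambda>m. \<delta>t * c m / Rt - s' ^ m - \<delta>t * s') \<longlonglongrightarrow> \<delta>t * 1 / Rt - 0 - \<delta>t * s'"
    by (intro tendsto_intros cl pl) (use a in auto)
  have pos: "\<delta>t * 1 / Rt - 0 - \<delta>t * s' > 0"
    using s'1 a by (simp add: field_simps)
  have ev1: "eventually (\<lambda>m. \<delta>t * c m / Rt - s' ^ m - \<delta>t * s' > 0) sequentially"
    using order_tendstoD(1)[OF gl pos] .
  have ev2: "eventually (\<lambda>m. s' ^ m < 1/16) sequentially"
    using order_tendstoD(2)[OF pl, of "1/16"] by simp
  have ev3: "eventually (\<lambda>m::nat. s' \<le> 1 - 1/(4*real m)) sequentially"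
    using s'0 by real_asymp
  have ev4: "eventually (\<lambda>m::nat. m \<ge> 2) sequentially"
    by (simp add: eventually_ge_at_top)
  have "eventually (\<lambda>m. \<delta>t * c m / Rt - s' ^ m - \<delta>t * s' > 0 \<and> s' ^ m < 1/16 \<and>
      s' \<le> 1 - 1/(4*real m) \<and> m \<ge> 2) sequentially"
    using ev1 ev2 ev3 ev4 by eventually_elim auto
  then obtain m0 where m0: "\<And>m. m \<ge> m0 \<Longrightarrow> \<delta>t * c m / Rt - s' ^ m - \<delta>t * s' > 0 \<and> s' ^ m < 1/16 \<and>
      s' \<le> 1 - 1/(4*real m) \<and> m \<ge> 2"
    unfolding eventually_sequentially by blast
  show ?thesis
  proof (intro exI allI impI)
    fix m R r w \<delta>
    assume mm: "m > m0" and R1: "1 < R" and RR: "R < min Rt (3/2)"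
      and dd: "\<delta>t \<le> \<delta>" "\<delta> \<le> 1/16"
    have M: "\<delta>t * c m / Rt - s' ^ m - \<delta>t * s' > 0" "s' ^ m < 1/16"
      "s' \<le> 1 - 1/(4*real m)" "m \<ge> 2" using m0[of m] mm by auto
    have d0: "0 < \<delta>" using dd a by simp
    have mr: "real m \<ge> 2" using M(4) by simp
    have cpos: "c m > 0" unfolding c_def using mr a by auto
    have Lc: "Lam \<delta> m \<ge> \<delta> * c m"
    proof -
      have "(\<delta>t / real m) powr (1 / (real m - 1)) \<le> (\<delta> / real m) powr (1 / (real m - 1))"
        using dd mr a by (intro powr_mono2) (auto simp: divide_right_mono)
      hence "(\<delta>t / real m) powr (1 / (real m - 1)) * ((real m - 1) / real m)
          \<le> (\<delta> / real m) powr (1 / (real m - 1)) * ((real m - 1) / real m)"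
        using mr by (intro mult_right_mono) auto
      hence "\<delta> * ((\<delta>t / real m) powr (1 / (real m - 1)) * ((real m - 1) / real m))
          \<le> \<delta> * ((\<delta> / real m) powr (1 / (real m - 1)) * ((real m - 1) / real m))"
        using d0 by (intro mult_left_mono) auto
      thus ?thesis unfolding Lam_def c_def by (simp add: mult.assoc)
    qed
    have L0: "Lam \<delta> m > 0" using Lc cpos d0
      by (smt (verit) mult_pos_pos)
    have LR: "\<delta> * c m / Rt \<le> Lam \<delta> m / R"
    proof -
      have "\<delta> * c m / Rt \<le> Lam \<delta> m / Rt" using Lc a by (simp add: divide_right_mono)
      also have "\<dots> \<le> Lam \<delta> m / R" using L0 R1 RR
        by (intro divide_left_mono) auto
      finally show ?thesis .
    qed
    have sc: "s' \<le> c m / Rt"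
    proof -
      have "\<delta>t * s' < \<delta>t * c m / Rt" using M(1) zero_le_power[of s' m] s'0 by linarith
      hence "\<delta>t * s' < \<delta>t * (c m / Rt)" by simp
      thus ?thesis using a(3) mult_less_cancel_left_pos[of "\<delta>t" "s'" "c m / Rt"] by linarith
    qed
    have key: "s' ^ m + \<delta> * s' \<le> Lam \<delta> m / R"
    proof -
      have "s' ^ m + \<delta> * s' = s' ^ m + \<delta>t * s' + (\<delta> - \<delta>t) * s'" by algebra
      also have "\<dots> \<le> \<delta>t * c m / Rt + (\<delta> - \<delta>t) * (c m / Rt)"
        using M(1) sc dd by (intro add_mono mult_left_mono) auto
      also have "\<dots> = \<delta> * c m / Rt" by algebra
      finally show ?thesis using LR by linarith
    qed
    have eq: "iota w \<delta> m R r z = z ^ m + of_real \<delta> * z + w" if z: "z \<in> ball 0 s'" for z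
    proof (rule iota_eq[OF M(4) d0 R1])
      have nz: "norm z \<le> s'" using z by simp
      have "4 * \<delta> / real m \<le> 1 / (4 * real m)" using dd mr by (simp add: field_simps)
      thus "norm z \<le> 1 - 4 * \<delta> / real m" using nz M(3) by linarith
      have "norm z ^ m + \<delta> * norm z \<le> s' ^ m + \<delta> * s'"
        using nz d0 by (intro add_mono power_mono mult_left_mono) auto
      thus "norm z ^ m + \<delta> * norm z \<le> Lam \<delta> m / R" using key by linarith
      have "\<delta> * s' \<le> 1/16" using dd s'0 d0
        by (smt (verit, ccfv_SIG) mult_le_cancel_left1)
      thus "norm z ^ m + \<delta> * norm z \<le> 1/8"
        using \<open>norm z ^ m + \<delta> * norm z \<le> s' ^ m + \<delta> * s'\<close> M(2) by linarith
      show "Lam \<delta> m > 0" by (rule L0)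
    qed
    have hol: "iota w \<delta> m R r holomorphic_on ball 0 s'"
      by (rule holomorphic_transform[of "\<lambda>z. z ^ m + of_real \<delta> * z + w"])
         (auto intro!: holomorphic_intros simp: eq)
    show "dbar_support (iota w \<delta> m R r) (ball 0 1) \<subseteq> {z \<in> ball 0 1. norm z > s}"
    proof
      fix z assume zd: "z \<in> dbar_support (iota w \<delta> m R r) (ball 0 1)"
      hence z1: "z \<in> ball 0 1" by (simp add: dbar_support_def)
      have "norm z > s"
      proof (rule ccontr)
        assume "\<not> norm z > s"
        hence "z \<in> ball 0 s'" using s'1 by simp
        moreover have "ball 0 s' \<subseteq> ball (0::complex) 1" using s'0 by auto
        ultimately show False using zd hol by (auto simp: dbar_support_def)
      qed
      thus "z \<in> {z \<in> ball 0 1. norm z > s}" using z1 by simp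
    qed
  qed
qed

end
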